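(* A multi-head HyTN $\mathcal{H}$ is consistent if and only if it is conservative, i.e. contains no negative cycle. Moreover, if all weights of $\mathcal{H}$ are integers, then $\mathcal{H}$ admits an integral feasible scheduling $s:V\to\mathbb{Z}$ if and only if it is conservative.
   Context: A multi-head HyTN is a pair $\mathcal{H}=(V,\mathcal{A})$, $V$ a finite node set, $\mathcal{A}$ a finite set of hyperarcs $A=(t_A,H_A,w_A)$ with tail $t_A\in V$, nonempty head set $H_A\subseteq V\setminus\{t_A\}$ and weights $w_A(v)\in\mathbb{R}$ for $v\in H_A$. A scheduling $s:V\to\mathbb{R}$ is feasible if $s(t_A)\ge\min_{v\in H_A}\{s(v)-w_A(v)\}$ for all $A\in\mathcal{A}$; $\mathcal{H}$ is consistent if a feasible scheduling exists. A cycle is a pair $(S,\mathcal{C})$ with $S\subseteq V$, $\mathcal{C}\subseteq\mathcal{A}$, such that $S=\bigcup_{A\in\mathcal{C}}(H_A\cup\{t_A\})\neq\emptyset$ and for every $v\in S$ there is a unique $A\in\mathcal{C}$ with $t_A=v$, denoted $a(v)$. A finite cyclic sequence is a sequence $v_1,\ldots,v_p$ of nodes of $S$ with $v_{t+1}\in H_{a(v_t)}$ for $1\le t<p$, $v_p=v_1$, and no other repeated node. The cycle is negative if every finite cyclic sequence satisfies $\sum_{t=1}^{p-1}w_{a(v_t)}(v_{t+1})<0$. $\mathcal{H}$ is conservative if it has no negative cycle. *)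

theory Defs
  imports Main "HOL.Real"
begin

type_synonym 'a hyperarc = "'a \<times> 'a set \<times> ('a \<Rightarrow> real)"

definition tl_arc :: "'a hyperarc \<Rightarrow> 'a" where "tl_arc A = fst A"
definition hd_arc :: "'a hyperarc \<Rightarrow> 'a set" where "hd_arc A = fst (snd A)"
definition wt_arc :: "'a hyperarc \<Rightarrow> 'a \<Rightarrow> real" where "wt_arc A = snd (snd A)"

definition hytn :: "'a set \<Rightarrow> 'a hyperarc set \<Rightarrow> bool" where
  "hytn V As \<longleftrightarrow> finite V \<and> finite As \<and>
     (\<forall>A\<in>As. tl_arc A \<in> V \<and> hd_arc A \<noteq> {} \<and> hd_arc A \<subseteq> V - {tl_arc A})"

definition feasible :: "'a set \<Rightarrow> 'a hyperarc set \<Rightarrow> ('a \<Rightarrow> real) \<Rightarrow> bool" where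
  "feasible V As s \<longleftrightarrow>
     (\<forall>A\<in>As. s (tl_arc A) \<ge> Min ((\<lambda>v. s v - wt_arc A v) ` hd_arc A))"

definition consistent :: "'a set \<Rightarrow> 'a hyperarc set \<Rightarrow> bool" where
  "consistent V As \<longleftrightarrow> (\<exists>s. feasible V As s)"

definition int_consistent :: "'a set \<Rightarrow> 'a hyperarc set \<Rightarrow> bool" where
  "int_consistent V As \<longleftrightarrow> (\<exists>s :: 'a \<Rightarrow> int. feasible V As (\<lambda>v. real_of_int (s v)))"

definition is_cycle :: "'a set \<Rightarrow> 'a hyperarc set \<Rightarrow> 'a set \<Rightarrow> 'a hyperarc set \<Rightarrow> bool" where
  "is_cycle V As S C \<longleftrightarrow> C \<subseteq> As \<and>
     S = (\<Union>A\<in>C. hd_arc A \<union> {tl_arc A}) \<and> S \<noteq> {} \<and>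
     (\<forall>v\<in>S. \<exists>!A. A \<in> C \<and> tl_arc A = v)"

definition out_arc :: "'a hyperarc set \<Rightarrow> 'a \<Rightarrow> 'a hyperarc" where
  "out_arc C v = (THE A. A \<in> C \<and> tl_arc A = v)"

definition cyclic_seq :: "'a set \<Rightarrow> 'a hyperarc set \<Rightarrow> 'a list \<Rightarrow> bool" where
  "cyclic_seq S C vs \<longleftrightarrow> length vs \<ge> 2 \<and> set vs \<subseteq> S \<and>
     (\<forall>i. i + 1 < length vs \<longrightarrow> vs ! (i+1) \<in> hd_arc (out_arc C (vs ! i))) \<and>
     last vs = hd vs \<and> distinct (butlast vs)"

definition seq_weight :: "'a hyperarc set \<Rightarrow> 'a list \<Rightarrow> real" where
  "seq_weight C vs = (\<Sum>i<length vs - 1. wt_arc (out_arc C (vs ! i)) (vs ! (i+1)))"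

definition negative_cycle :: "'a set \<Rightarrow> 'a hyperarc set \<Rightarrow> 'a set \<Rightarrow> 'a hyperarc set \<Rightarrow> bool" where
  "negative_cycle V As S C \<longleftrightarrow> is_cycle V As S C \<and>
     (\<forall>vs. cyclic_seq S C vs \<longrightarrow> seq_weight C vs < 0)"

definition conservative :: "'a set \<Rightarrow> 'a hyperarc set \<Rightarrow> bool" where
  "conservative V As \<longleftrightarrow> \<not> (\<exists>S C. negative_cycle V As S C)"

end

theory Submission
  imports Defs
begin

definition wfeas :: "'a hyperarc set \<Rightarrow> ('a \<Rightarrow> real) \<Rightarrow> bool" where
  "wfeas As s \<longleftrightarrow> (\<forall>A\<in>As. \<exists>v\<in>hd_arc A. s v - wt_arc A v \<le> s (tl_arc A))"

lemma hytn_fin_hd: "hytn V As \<Longrightarrow> A \<in> As \<Longrightarrow> finite (hd_arc A)"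
  unfolding hytn_def by (meson finite_subset Diff_subset subset_trans)

lemma feasible_iff: "hytn V As \<Longrightarrow> feasible V As s \<longleftrightarrow> wfeas As s"
proof -
  assume h: "hytn V As"
  have "\<And>A. A \<in> As \<Longrightarrow> (s (tl_arc A) \<ge> Min ((\<lambda>v. s v - wt_arc A v) ` hd_arc A))
          \<longleftrightarrow> (\<exists>v\<in>hd_arc A. s v - wt_arc A v \<le> s (tl_arc A))"
  proof -
    fix A assume A: "A \<in> As"
    have "finite ((\<lambda>v. s v - wt_arc A v) ` hd_arc A)" using hytn_fin_hd[OF h A] by simp
    moreover have "(\<lambda>v. s v - wt_arc A v) ` hd_arc A \<noteq> {}" using h A unfolding hytn_def by auto
    ultimately show "?thesis A" by (simp add: Min_le_iff)
  qed
  thus ?thesis unfolding feasible_def wfeas_def by auto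
qed

lemma out_arc_prop: "\<exists>!A. A \<in> C \<and> tl_arc A = v \<Longrightarrow> out_arc C v \<in> C \<and> tl_arc (out_arc C v) = v"
  unfolding out_arc_def by (rule theI')

lemma cons_imp:
  assumes h: "hytn V As" and f: "wfeas As s" and nc: "negative_cycle V As S C"
  shows False
proof -
  have cyc: "C \<subseteq> As" "S = (\<Union>A\<in>C. hd_arc A \<union> {tl_arc A})" "S \<noteq> {}"
    "\<forall>v\<in>S. \<exists>!A. A \<in> C \<and> tl_arc A = v"
    using nc unfolding negative_cycle_def is_cycle_def by auto
  have neg: "\<And>vs. cyclic_seq S C vs \<Longrightarrow> seq_weight C vs < 0"
    using nc unfolding negative_cycle_def by auto
  have hA: "\<And>A. A \<in> As \<Longrightarrow> hd_arc A \<union> {tl_arc A} \<subseteq> V"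
    using h unfolding hytn_def by blast
  have "S \<subseteq> V" unfolding cyc(2) using hA cyc(1) by blast
  moreover have "finite V" using h unfolding hytn_def by simp
  ultimately have finS: "finite S" by (rule finite_subset)
  define oa where "oa = out_arc C"
  have oa: "\<And>v. v \<in> S \<Longrightarrow> oa v \<in> C \<and> tl_arc (oa v) = v \<and> hd_arc (oa v) \<subseteq> S"
  proof -
    fix v assume v: "v \<in> S"
    have 1: "oa v \<in> C \<and> tl_arc (oa v) = v" unfolding oa_def
      using out_arc_prop[OF cyc(4)[rule_format, OF v]] .
    hence "hd_arc (oa v) \<subseteq> (\<Union>A\<in>C. hd_arc A \<union> {tl_arc A})" by blast
    thus "?thesis v" using 1 cyc(2) by simp
  qed
  define nxt where "nxt v = (SOME u. u \<in> hd_arc (oa v) \<and> s u - wt_arc (oa v) u \<le> s v)" for v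
  have nxt: "\<And>v. v \<in> S \<Longrightarrow> nxt v \<in> hd_arc (oa v) \<and> s (nxt v) - wt_arc (oa v) (nxt v) \<le> s v"
  proof -
    fix v assume v: "v \<in> S"
    have "\<exists>u. u \<in> hd_arc (oa v) \<and> s u - wt_arc (oa v) u \<le> s v"
      using f oa[OF v] cyc(1) unfolding wfeas_def by (metis subsetD)
    thus "?thesis v" unfolding nxt_def by (rule someI_ex)
  qed
  have nxtS: "\<And>v. v \<in> S \<Longrightarrow> nxt v \<in> S" using nxt oa by blast
  obtain v0 where v0: "v0 \<in> S" using cyc(3) by blast
  define x where "x k = (nxt ^^ k) v0" for k
  have xS: "x k \<in> S" for k by (induction k) (simp_all add: x_def v0 nxtS)
  have xSuc: "x (Suc k) = nxt (x k)" for k by (simp add: x_def)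
  have "\<not> inj_on x {..card S}"
  proof
    assume "inj_on x {..card S}"
    hence "card (x ` {..card S}) = Suc (card S)" by (simp add: card_image)
    moreover have "card (x ` {..card S}) \<le> card S" using xS finS by (intro card_mono) auto
    ultimately show False by simp
  qed
  then obtain i j where "x i = x j" "i \<noteq> j" unfolding inj_on_def by blast
  hence ex: "\<exists>j. \<exists>i<j. x i = x j" by (metis linorder_neqE_nat)
  define J where "J = (LEAST j. \<exists>i<j. x i = x j)"
  have "\<exists>i<J. x i = x J" unfolding J_def using LeastI_ex[OF ex] .
  then obtain I where IJ: "I < J" "x I = x J" by blast
  have mini: "\<And>a b. a < b \<Longrightarrow> b < J \<Longrightarrow> x a \<noteq> x b"
    using not_less_Least unfolding J_def by blast
  define vs where "vs = map x [I..<Suc J]"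
  have len: "length vs = Suc J - I" unfolding vs_def using IJ by simp
  have vsn: "\<And>k. k < length vs \<Longrightarrow> vs ! k = x (I + k)" unfolding vs_def using IJ by (simp del: upt_Suc)
  have "cyclic_seq S C vs"
    unfolding cyclic_seq_def
  proof (intro conjI allI impI)
    show "2 \<le> length vs" using len IJ by simp
    show "set vs \<subseteq> S" unfolding vs_def using xS by auto
    show "last vs = hd vs" unfolding vs_def using IJ by (simp add: last_map hd_map)
    fix k assume k: "k + 1 < length vs"
    have "vs ! (k+1) = nxt (vs ! k)" using vsn k xSuc by simp
    thus "vs ! (k + 1) \<in> hd_arc (out_arc C (vs ! k))" using nxt xS vsn k
      unfolding oa_def by (metis Suc_lessD Suc_eq_plus1)
  next
    have "butlast vs = map x [I..<J]" unfolding vs_def using IJ by (simp add: map_butlast)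
    moreover have "inj_on x {I..<J}" unfolding inj_on_def using mini
      by (metis atLeastLessThan_iff linorder_neqE_nat)
    ultimately show "distinct (butlast vs)" by (simp add: distinct_map)
  qed
  hence "seq_weight C vs < 0" by (rule neg)
  moreover have "seq_weight C vs \<ge> 0"
  proof -
    have "seq_weight C vs = (\<Sum>k<J - I. wt_arc (oa (x (I+k))) (x (I + Suc k)))"
      unfolding seq_weight_def oa_def using len vsn by (intro sum.cong) auto
    also have "\<dots> \<ge> (\<Sum>k<J - I. s (x (I + Suc k)) - s (x (I + k)))"
      using nxt xS xSuc by (intro sum_mono) (metis add_Suc_right diff_le_eq add.commute)
    moreover have "(\<Sum>k<J - I. s (x (I + Suc k)) - s (x (I + k))) = s (x (I + (J - I))) - s (x (I + 0))"
      by (rule sum_lessThan_telescope[where f="\<lambda>k. s (x (I + k))"])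
    ultimately show ?thesis using IJ by simp
  qed
  ultimately show False by simp
qed

definition addgrp :: "real set \<Rightarrow> bool" where
  "addgrp K \<longleftrightarrow> 0 \<in> K \<and> (\<forall>a\<in>K. \<forall>b\<in>K. a + b \<in> K \<and> a - b \<in> K)"

lemma mono_nc: "As' \<subseteq> As \<Longrightarrow> negative_cycle V As' S C \<Longrightarrow> negative_cycle V As S C"
  unfolding negative_cycle_def is_cycle_def by (meson subset_trans)

lemma main_lemma:
  assumes "finite As"
    and "\<forall>A\<in>As. hd_arc A \<noteq> {} \<and> tl_arc A \<notin> hd_arc A \<and> (\<forall>v\<in>hd_arc A. wt_arc A v \<in> K)"
    and "addgrp K"
  shows "(\<exists>S C. negative_cycle V As S C) \<or> (\<exists>s. wfeas As s \<and> (\<forall>x. s x \<in> K))"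
  using assms
proof (induction "card As" arbitrary: As rule: less_induct)
  case less
  note fin = less.prems(1) and hyp = less.prems(2) and grp = less.prems(3)
  have K0: "0 \<in> K" and Kadd: "\<And>a b. a\<in>K \<Longrightarrow> b\<in>K \<Longrightarrow> a+b \<in> K"
    and Kdiff: "\<And>a b. a\<in>K \<Longrightarrow> b\<in>K \<Longrightarrow> a-b \<in> K" using grp unfolding addgrp_def by auto
  have Kmin: "\<And>a b. a\<in>K \<Longrightarrow> b\<in>K \<Longrightarrow> min a b \<in> K" by (simp add: min_def)
  have IH: "(\<exists>S C. negative_cycle V As S C) \<or> (\<exists>s. wfeas As' s \<and> (\<forall>x. s x \<in> K))"
    if sub: "As' \<subset> As" for As'
  proof -
    have c: "card As' < card As" using psubset_card_mono[OF fin sub] .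
    have f: "finite As'" using sub fin finite_subset by blast
    have h: "\<forall>A\<in>As'. hd_arc A \<noteq> {} \<and> tl_arc A \<notin> hd_arc A \<and> (\<forall>v\<in>hd_arc A. wt_arc A v \<in> K)"
      using hyp sub by blast
    have "(\<exists>S C. negative_cycle V As' S C) \<or> (\<exists>s. wfeas As' s \<and> (\<forall>x. s x \<in> K))"
      using less.hyps[OF c f h grp] .
    thus ?thesis using mono_nc sub by blast
  qed
  show ?case
  proof (cases "\<exists>S C. negative_cycle V As S C")
    case True thus ?thesis by blast
  next
    case noneg: False
    have IH': "\<exists>s. wfeas As' s \<and> (\<forall>x. s x \<in> K)" if "As' \<subset> As" for As'
      using IH[OF that] noneg by blast
    have "\<exists>s. wfeas As s \<and> (\<forall>x. s x \<in> K)"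
    proof (cases "\<exists>A1\<in>As. \<exists>A2\<in>As. A1 \<noteq> A2 \<and> tl_arc A1 = tl_arc A2")
      case True
      then obtain A1 A2 where A: "A1\<in>As" "A2\<in>As" "A1\<noteq>A2" "tl_arc A1 = tl_arc A2" by blast
      have "As - {A2} \<subset> As" using A by auto
      then obtain s1 where s1: "wfeas (As - {A2}) s1" "\<forall>x. s1 x \<in> K" using IH' by blast
      have "As - {A1} \<subset> As" using A by auto
      then obtain s2 where s2: "wfeas (As - {A1}) s2" "\<forall>x. s2 x \<in> K" using IH' by blast
      define t where "t = tl_arc A1"
      define c where "c = s1 t - s2 t"
      define s where "s x = min (s1 x) (s2 x + c)" for x
      have "wfeas As s" unfolding wfeas_def
      proof
        fix B assume B: "B \<in> As"
        show "\<exists>v\<in>hd_arc B. s v - wt_arc B v \<le> s (tl_arc B)"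
        proof -
          have w1: ?thesis if nA: "B \<noteq> A2" and le: "s1 (tl_arc B) \<le> s2 (tl_arc B) + c"
          proof -
            obtain v where v: "v \<in> hd_arc B" "s1 v - wt_arc B v \<le> s1 (tl_arc B)"
              using s1(1) B nA unfolding wfeas_def by auto
            have "s v \<le> s1 v" unfolding s_def by simp
            moreover have "s (tl_arc B) = s1 (tl_arc B)" unfolding s_def using le by simp
            ultimately show ?thesis using v by (intro bexI[of _ v]) auto
          qed
          have w2: ?thesis if nA: "B \<noteq> A1" and le: "s2 (tl_arc B) + c \<le> s1 (tl_arc B)"
          proof -
            obtain v where v: "v \<in> hd_arc B" "s2 v - wt_arc B v \<le> s2 (tl_arc B)"
              using s2(1) B nA unfolding wfeas_def by auto
            have "s v \<le> s2 v + c" unfolding s_def by simp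
            moreover have "s (tl_arc B) = s2 (tl_arc B) + c" unfolding s_def using le by simp
            ultimately show ?thesis using v by (intro bexI[of _ v]) auto
          qed
          have eqt: "s1 t = s2 t + c" unfolding c_def by simp
          show ?thesis
          proof (cases "B = A1")
            case True thus ?thesis using w1 A eqt t_def by simp
          next
            case n1: False
            show ?thesis
            proof (cases "B = A2")
              case True thus ?thesis using w2 A eqt t_def by simp
            next
              case False thus ?thesis using w1 w2 n1 by linarith
            qed
          qed
        qed
      qed
      moreover have "\<forall>x. s x \<in> K"
        using s1(2) s2(2) Kmin Kadd Kdiff unfolding s_def c_def by simp
      ultimately show ?thesis by blast
    next
      case False
      hence uniq: "\<And>A B. A\<in>As \<Longrightarrow> B\<in>As \<Longrightarrow> tl_arc A = tl_arc B \<Longrightarrow> A = B" by blast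
      show ?thesis
      proof (cases "As = {}")
        case True
        hence "wfeas As (\<lambda>_. 0)" unfolding wfeas_def by simp
        thus ?thesis using K0 by blast
      next
        case ne: False
        show ?thesis
        proof (cases "\<exists>A\<in>As. \<exists>v\<in>hd_arc A. v \<notin> tl_arc ` As")
          case True
          then obtain A v where A: "A \<in> As" "v \<in> hd_arc A" "v \<notin> tl_arc ` As" by blast
          have "As - {A} \<subset> As" using A by auto
          then obtain s' where s': "wfeas (As - {A}) s'" "\<forall>x. s' x \<in> K" using IH' by blast
          define s where "s = s'(v := min (s' v) (s' (tl_arc A) + wt_arc A v))"
          have sle: "s y \<le> s' y" for y by (simp add: s_def)
          have stl: "s (tl_arc B) = s' (tl_arc B)" if "B \<in> As" for B
            using A(3) that by (auto simp: s_def)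
          have "wfeas As s" unfolding wfeas_def
          proof
            fix B assume B: "B \<in> As"
            show "\<exists>v\<in>hd_arc B. s v - wt_arc B v \<le> s (tl_arc B)"
            proof (cases "B = A")
              case True
              have "s v \<le> s' (tl_arc A) + wt_arc A v" by (simp add: s_def)
              thus ?thesis using True A stl[OF A(1)] by (intro bexI[of _ v]) auto
            next
              case False
              then obtain u where u: "u \<in> hd_arc B" "s' u - wt_arc B u \<le> s' (tl_arc B)"
                using s'(1) B unfolding wfeas_def by auto
              thus ?thesis using sle[of u] stl[OF B] by (intro bexI[of _ u]) auto
            qed
          qed
          moreover have "\<forall>x. s x \<in> K"
            using s'(2) Kmin Kadd hyp A(1,2) unfolding s_def by simp
          ultimately show ?thesis by blast
        next
          case False
          hence hdT: "\<And>A v. A\<in>As \<Longrightarrow> v \<in> hd_arc A \<Longrightarrow> v \<in> tl_arc ` As" by blast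
          define T where "T = tl_arc ` As"
          have uniqT: "\<exists>!A. A \<in> As \<and> tl_arc A = y" if yT: "y \<in> T" for y
          proof -
            obtain A where A: "A \<in> As" "tl_arc A = y" using yT unfolding T_def by blast
            show ?thesis using uniq A by (intro ex1I[of _ A]) auto
          qed
          have cyc: "is_cycle V As T As"
            unfolding is_cycle_def
          proof (intro conjI ballI)
            show "As \<subseteq> As" by simp
            show "T = (\<Union>A\<in>As. hd_arc A \<union> {tl_arc A})" unfolding T_def using hdT by blast
            show "T \<noteq> {}" using ne unfolding T_def by simp
          qed (rule uniqT)
          have "\<not> negative_cycle V As T As" using noneg by blast
          then obtain vs where vs: "cyclic_seq T As vs" "\<not> seq_weight As vs < 0"
            using cyc unfolding negative_cycle_def by blast
          define q where "q = length vs - 1"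
          have vsl: "2 \<le> length vs" "set vs \<subseteq> T"
            "\<And>i. i + 1 < length vs \<Longrightarrow> vs!(i+1) \<in> hd_arc (out_arc As (vs!i))"
            "last vs = hd vs" "distinct (butlast vs)"
            using vs(1) unfolding cyclic_seq_def by auto
          have q1: "1 \<le> q" and qlen: "length vs = Suc q" using vsl(1) by (auto simp: q_def)
          define oa where "oa = out_arc As"
          have oa: "oa y \<in> As \<and> tl_arc (oa y) = y" if "y \<in> T" for y
            unfolding oa_def using out_arc_prop[OF uniqT[OF that]] .
          have vsT: "vs!j \<in> T" if "j \<le> q" for j
            using vsl(2) qlen that by (metis less_Suc_eq_le nth_mem subsetD)
          have step: "vs!(Suc j) \<in> hd_arc (oa (vs!j))" if "j < q" for j
            using vsl(3)[of j] qlen that unfolding oa_def by simp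
          have wrap: "vs!q = vs!0"
          proof -
            have "vs \<noteq> []" using qlen by auto
            thus ?thesis using vsl(4) qlen by (simp add: last_conv_nth hd_conv_nth)
          qed
          have dist: "i = j" if "i<q" "j<q" "vs!i = vs!j" for i j
          proof -
            have "length (butlast vs) = q" using qlen by simp
            moreover have "butlast vs ! i = butlast vs ! j" using that by (simp add: nth_butlast qlen)
            ultimately show ?thesis using vsl(5) that by (simp add: nth_eq_iff_index_eq)
          qed
          define w where "w k = wt_arc (oa (vs!k)) (vs!(Suc k))" for k
          define g where "g j = (\<Sum>k<j. w k)" for j
          have gSuc: "g (Suc j) = g j + w j" for j by (simp add: g_def)
          have gq: "g q \<ge> 0"
          proof -
            have "seq_weight As vs = g q"
              unfolding seq_weight_def g_def w_def oa_def q_def by simp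
            thus ?thesis using vs(2) by simp
          qed
          have wK: "w k \<in> K" if "k < q" for k
          proof -
            have "oa (vs!k) \<in> As" using oa vsT that by simp
            thus ?thesis using hyp step[OF that] unfolding w_def by blast
          qed
          have gK: "j \<le> q \<Longrightarrow> g j \<in> K" for j
            by (induction j) (auto simp: g_def K0 intro!: Kadd wK)
          define Z where "Z = (\<lambda>j. vs!j) ` {..<q}"
          define idx where "idx y = (THE j. j < q \<and> vs!j = y)" for y
          have idx: "idx (vs!j) = j" if "j < q" for j
            unfolding idx_def using dist that by (intro the_equality) auto
          define R where "R = {B\<in>As. tl_arc B \<in> Z}"
          have "vs!0 \<in> Z" using q1 unfolding Z_def by auto
          hence "oa (vs!0) \<in> R" using oa[OF vsT[of 0]] unfolding R_def by simp
          hence "As - R \<subset> As" unfolding R_def by blast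
          then obtain s' where s': "wfeas (As - R) s'" "\<forall>x. s' x \<in> K" using IH' by blast
          define c where "c = Min (insert 0 ((\<lambda>j. s' (vs!j) - g j) ` {..<q}))"
          have cK: "c \<in> K"
          proof -
            have "c \<in> insert 0 ((\<lambda>j. s' (vs!j) - g j) ` {..<q})" unfolding c_def by (intro Min_in) auto
            thus ?thesis using K0 s'(2) gK Kdiff by auto
          qed
          have cle: "c \<le> s' (vs!j) - g j" if "j < q" for j
            unfolding c_def using that by (intro Min_le) auto
          define s where "s y = (if y \<in> Z then g (idx y) + c else s' y)" for y
          have sZ: "s (vs!j) = g j + c" if "j < q" for j
            using idx[OF that] that unfolding s_def Z_def by auto
          have sle: "s y \<le> s' y" for y
          proof (cases "y \<in> Z")
            case True
            then obtain j where "j < q" "y = vs!j" unfolding Z_def by auto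
            thus ?thesis using sZ cle by fastforce
          next
            case False thus ?thesis unfolding s_def by simp
          qed
          have sK: "\<forall>y. s y \<in> K"
          proof
            fix y show "s y \<in> K"
            proof (cases "y \<in> Z")
              case True
              then obtain j where "j < q" "y = vs!j" unfolding Z_def by auto
              thus ?thesis using sZ gK cK Kadd by simp
            next
              case False thus ?thesis using s'(2) unfolding s_def by simp
            qed
          qed
          have "wfeas As s" unfolding wfeas_def
          proof
            fix B assume B: "B \<in> As"
            show "\<exists>v\<in>hd_arc B. s v - wt_arc B v \<le> s (tl_arc B)"
            proof (cases "B \<in> R")
              case True
              then obtain j where j: "j < q" "tl_arc B = vs!j" unfolding R_def Z_def by auto
              have Bj: "B = oa (vs!j)" using uniq B oa vsT j by (metis less_imp_le)
              have hs: "vs!(Suc j) \<in> hd_arc B" using step j Bj by simp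
              have wj: "w j = wt_arc B (vs!(Suc j))" unfolding w_def using Bj by simp
              have "s (vs!(Suc j)) - wt_arc B (vs!(Suc j)) \<le> s (vs!j)"
              proof (cases "Suc j < q")
                case True
                thus ?thesis using sZ[OF True] sZ[OF j(1)] gSuc wj by simp
              next
                case False
                hence "Suc j = q" using j by simp
                hence "vs!(Suc j) = vs!0" "g j + w j \<ge> 0" using wrap gq gSuc by auto
                moreover have "s (vs!0) = c" using sZ[of 0] q1 by (simp add: g_def)
                ultimately show ?thesis using sZ[OF j(1)] wj by simp
              qed
              thus ?thesis using hs j by (intro bexI[of _ "vs!(Suc j)"]) auto
            next
              case False
              hence "B \<in> As - R" using B by simp
              then obtain v where v: "v \<in> hd_arc B" "s' v - wt_arc B v \<le> s' (tl_arc B)"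
                using s'(1) unfolding wfeas_def by blast
              have "tl_arc B \<notin> Z" using False B unfolding R_def by simp
              hence "s (tl_arc B) = s' (tl_arc B)" unfolding s_def by simp
              thus ?thesis using v sle[of v] by (intro bexI[of _ v]) auto
            qed
          qed
          thus ?thesis using sK by blast
        qed
      qed
    qed
    thus ?thesis by blast
  qed
qed


theorem mainTheorem6:
  fixes V :: "'a set" and As :: "'a hyperarc set"
  assumes "hytn V As"
  shows "(consistent V As \<longleftrightarrow> conservative V As) \<and>
         ((\<forall>A\<in>As. \<forall>v\<in>hd_arc A. wt_arc A v \<in> \<int>) \<longrightarrow>
            (int_consistent V As \<longleftrightarrow> conservative V As))"
proof -
  have h: "hytn V As" using assms .
  have finAs: "finite As" using h unfolding hytn_def by simp
  have hypK: "\<forall>A\<in>As. hd_arc A \<noteq> {} \<and> tl_arc A \<notin> hd_arc A \<and> (\<forall>v\<in>hd_arc A. wt_arc A v \<in> K)"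
    if "\<forall>A\<in>As. \<forall>v\<in>hd_arc A. wt_arc A v \<in> K" for K
    using h that unfolding hytn_def by blast
  have c2c: "conservative V As" if cs: "consistent V As"
  proof -
    obtain s where "feasible V As s" using cs unfolding consistent_def by blast
    hence "wfeas As s" using feasible_iff[OF h] by simp
    thus ?thesis unfolding conservative_def using cons_imp[OF h] by blast
  qed
  have cons2: "consistent V As" if cv: "conservative V As"
  proof -
    have "addgrp UNIV" unfolding addgrp_def by simp
    from main_lemma[OF finAs hypK this, of V] cv obtain s where "wfeas As s"
      unfolding conservative_def by auto
    thus ?thesis unfolding consistent_def using feasible_iff[OF h] by blast
  qed
  have intpart: "int_consistent V As \<longleftrightarrow> conservative V As"
    if ints: "\<forall>A\<in>As. \<forall>v\<in>hd_arc A. wt_arc A v \<in> \<int>"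
  proof
    assume "int_consistent V As"
    hence "consistent V As" unfolding int_consistent_def consistent_def by blast
    thus "conservative V As" by (rule c2c)
  next
    assume cv: "conservative V As"
    have "addgrp \<int>" unfolding addgrp_def by (auto intro: Ints_add Ints_diff)
    from main_lemma[OF finAs hypK[OF ints] this, of V] cv obtain s where
      s: "wfeas As s" "\<forall>x. s x \<in> \<int>" unfolding conservative_def by auto
    have "(\<lambda>v. real_of_int \<lfloor>s v\<rfloor>) = s"
    proof
      fix v
      from s(2) have "s v \<in> \<int>" by simp
      then obtain n where "s v = of_int n" by (auto elim: Ints_cases)
      thus "real_of_int \<lfloor>s v\<rfloor> = s v" by simp
    qed
    hence "feasible V As (\<lambda>v. real_of_int \<lfloor>s v\<rfloor>)" using s(1) feasible_iff[OF h] by simp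
    thus "int_consistent V As" unfolding int_consistent_def by (intro exI[of _ "\<lambda>v. \<lfloor>s v\<rfloor>"])
  qed
  show ?thesis using c2c cons2 intpart by blast
qed

end
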